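(* Let $\omega\in\Omega$ and consider the contours of $\phi(\omega)$. (I) If there exist at least two infinite contours, then there exists an infinite $0$-cluster or an infinite $1$-cluster. (II) If $C_1$ and $C_2$ are two distinct infinite contours, then there exists an infinite cluster incident to $C_1$. (III) If $\xi$ is a cluster incident to two distinct infinite contours, then $\xi$ is infinite. (IV) Suppose $C_1$ is an infinite contour and $\mathcal{C}$ is a nonempty collection of infinite contours with $C_1\notin\mathcal{C}$; let $R$ be the unbounded component of $\mathbb{R}^2\setminus\bigcup_{C\in\mathcal{C}}C$ containing $C_1$. Then there is an infinite cluster contained in $R$.
   Context: Let $G$ be the square grid with vertex set $\mathbb{Z}^2$ and nearest-neighbour edges. The face of $G$ with lower-left corner $(m,n)$ is black if $m+n$ is even, white otherwise. $\Omega\subset\{0,1\}^{\mathbb{Z}^2}$ is the set of $\omega$ such that for every black face the states of its four vertices, listed clockwise from the lower-left corner, form one of $0000,1111,0011,1100,0110,1001$. A cluster of $\omega$ is a maximal $G$-connected set of vertices on which $\omega$ is constant ($0$-cluster or $1$-cluster), infinite if it has infinitely many vertices. Let $\mathbb{L}_1$ have vertices $(m-\tfrac12,n+\tfrac12)$, $m,n$ both even, and $\mathbb{L}_2$ vertices $(m-\tfrac12,n+\tfrac12)$, $m,n$ both odd; in each, two vertices are joined by an edge (a closed segment of length $2$) iff at Euclidean distance $2$. The center of each black face $F$ is the midpoint of exactly one edge $e_1$ of $\mathbb{L}_1$ and one edge $e_2$ of $\mathbb{L}_2$. Define $\phi(\omega)\in\{0,1\}^{E(\mathbb{L}_1)\cup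 E(\mathbb{L}_2)}$: if the configuration around $F$ is $0000$ or $1111$ both $e_1,e_2$ get $0$; if the two upper vertices share a state different from the two lower ones, the horizontal one of $e_1,e_2$ gets $1$, the vertical $0$; if the two left vertices share a state different from the two right ones, the vertical one gets $1$, the horizontal $0$. Edges with value $1$ are present. A contour is a connected component of the set of present edges, viewed as a subset of $\mathbb{R}^2$ (union of its edges); it is infinite if it has infinitely many edges. A cluster is incident to a contour if some vertex of the cluster is at Euclidean distance $\tfrac12$ from some edge (segment) of the contour. *)

theory Defs
  imports "HOL-Analysis.Analysis"
begin

type_synonym vertex = "int \<times> int"
type_synonym config = "vertex \<Rightarrow> nat"

text \<open>The face with lower-left corner (m,n) is black iff m+n is even.\<close>
definition black :: "int \<Rightarrow> int \<Rightarrow> bool" where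
  "black m n \<longleftrightarrow> even (m + n)"

text \<open>Allowed states of the four vertices of a black face, listed clockwise
  from the lower-left corner: (m,n), (m,n+1), (m+1,n+1), (m+1,n).\<close>
definition allowed :: "(nat \<times> nat \<times> nat \<times> nat) set" where
  "allowed = {(0,0,0,0), (1,1,1,1), (0,0,1,1), (1,1,0,0), (0,1,1,0), (1,0,0,1)}"

definition Omega :: "config set" where
  "Omega = {\<omega>. (\<forall>v. \<omega> v \<in> {0,1}) \<and>
     (\<forall>m n. black m n \<longrightarrow> (\<omega> (m,n), \<omega> (m,n+1), \<omega> (m+1,n+1), \<omega> (m+1,n)) \<in> allowed)}"

definition vpt :: "vertex \<Rightarrow> real \<times> real" where
  "vpt v = (real_of_int (fst v), real_of_int (snd v))"

definition grid_adj :: "vertex \<Rightarrow> vertex \<Rightarrow> bool" where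
  "grid_adj u v \<longleftrightarrow> \<bar>fst u - fst v\<bar> + \<bar>snd u - snd v\<bar> = 1"

text \<open>Same-state nearest-neighbour step; clusters are its connectivity classes
  (= maximal G-connected sets on which \<omega> is constant).\<close>
definition same_step :: "config \<Rightarrow> vertex \<Rightarrow> vertex \<Rightarrow> bool" where
  "same_step \<omega> u v \<longleftrightarrow> grid_adj u v \<and> \<omega> u = \<omega> v"

definition cluster :: "config \<Rightarrow> vertex set \<Rightarrow> bool" where
  "cluster \<omega> \<xi> \<longleftrightarrow> (\<exists>v. \<xi> = {w. (same_step \<omega>)\<^sup>*\<^sup>* v w})"

definition L1_vert :: "(real \<times> real) set" where
  "L1_vert = {(real_of_int m - 1/2, real_of_int n + 1/2) | m n. even m \<and> even n}"

definition L2_vert :: "(real \<times> real) set" where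
  "L2_vert = {(real_of_int m - 1/2, real_of_int n + 1/2) | m n. odd m \<and> odd n}"

definition lat_edges :: "(real \<times> real) set \<Rightarrow> (real \<times> real) set set" where
  "lat_edges V = {closed_segment p q | p q. p \<in> V \<and> q \<in> V \<and> dist p q = 2}"

definition all_edges :: "(real \<times> real) set set" where
  "all_edges = lat_edges L1_vert \<union> lat_edges L2_vert"

definition face_center :: "int \<Rightarrow> int \<Rightarrow> real \<times> real" where
  "face_center m n = (real_of_int m + 1/2, real_of_int n + 1/2)"

text \<open>phi \<omega> e = True iff edge e gets value 1.  The black face F with
  lower-left corner (m,n) is the one whose center is the midpoint of e.
  Upper vertices (m,n+1),(m+1,n+1); lower (m,n),(m+1,n);
  left (m,n),(m,n+1); right (m+1,n),(m+1,n+1).\<close>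
definition phi :: "config \<Rightarrow> (real \<times> real) set \<Rightarrow> bool" where
  "phi \<omega> e \<longleftrightarrow> e \<in> all_edges \<and>
     (\<exists>p q m n. e = closed_segment p q \<and> black m n \<and> midpoint p q = face_center m n \<and>
        ((snd p = snd q \<and> \<omega> (m,n+1) = \<omega> (m+1,n+1) \<and> \<omega> (m,n) = \<omega> (m+1,n)
            \<and> \<omega> (m,n+1) \<noteq> \<omega> (m,n)) \<or>
         (fst p = fst q \<and> \<omega> (m,n) = \<omega> (m,n+1) \<and> \<omega> (m+1,n) = \<omega> (m+1,n+1)
            \<and> \<omega> (m,n) \<noteq> \<omega> (m+1,n))))"

definition present_edges :: "config \<Rightarrow> (real \<times> real) set set" where
  "present_edges \<omega> = {e. phi \<omega> e}"

definition contours :: "config \<Rightarrow> (real \<times> real) set set" where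
  "contours \<omega> = components (\<Union> (present_edges \<omega>))"

definition contour_edges :: "config \<Rightarrow> (real \<times> real) set \<Rightarrow> (real \<times> real) set set" where
  "contour_edges \<omega> C = {e \<in> present_edges \<omega>. e \<subseteq> C}"

definition infinite_contour :: "config \<Rightarrow> (real \<times> real) set \<Rightarrow> bool" where
  "infinite_contour \<omega> C \<longleftrightarrow> C \<in> contours \<omega> \<and> infinite (contour_edges \<omega> C)"

definition incident :: "config \<Rightarrow> vertex set \<Rightarrow> (real \<times> real) set \<Rightarrow> bool" where
  "incident \<omega> \<xi> C \<longleftrightarrow> (\<exists>v\<in>\<xi>. \<exists>e\<in>contour_edges \<omega> C. infdist (vpt v) e = 1/2)"

end

theory Submission
  imports Defs
begin


definition hseg :: "int \<Rightarrow> int \<Rightarrow> (real \<times> real) set" where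
  "hseg m n = {p. snd p = of_int n + 1/2 \<and> of_int m - 1/2 \<le> fst p \<and> fst p \<le> of_int m + 3/2}"
definition vseg :: "int \<Rightarrow> int \<Rightarrow> (real \<times> real) set" where
  "vseg m n = {p. fst p = of_int m + 1/2 \<and> of_int n - 1/2 \<le> snd p \<and> snd p \<le> of_int n + 3/2}"

lemma seg_h: 
  fixes a b y :: real assumes "a \<le> b"
  shows "closed_segment (a,y) (b,y) = {p. snd p = y \<and> a \<le> fst p \<and> fst p \<le> b}"
proof -
  have "(x,x') \<in> closed_segment (a,y) (b,y) \<longleftrightarrow> x' = y \<and> a \<le> x \<and> x \<le> b" for x x'
  proof
    assume "(x,x') \<in> closed_segment (a,y) (b,y)"
    then have "x \<in> closed_segment a b" "x' \<in> closed_segment y y" using closed_segment_PairD by blast+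
    then show "x' = y \<and> a \<le> x \<and> x \<le> b" using assms closed_segment_eq_real_ivl1 by auto
  next
    assume h: "x' = y \<and> a \<le> x \<and> x \<le> b"
    then have "x \<in> closed_segment a b" using assms closed_segment_eq_real_ivl1 by auto
    then obtain u where u: "0 \<le> u" "u \<le> 1" "x = (1-u)*a + u*b" by (auto simp: closed_segment_def)
    then show "(x,x') \<in> closed_segment (a,y) (b,y)" using h
      by (auto simp: closed_segment_def algebra_simps intro!: exI[of _ u])
  qed
  then show ?thesis by auto
qed

lemma seg_v: 
  fixes a b x :: real assumes "a \<le> b"
  shows "closed_segment (x,a) (x,b) = {p. fst p = x \<and> a \<le> snd p \<and> snd p \<le> b}"
proof -
  have "(z,z') \<in> closed_segment (x,a) (x,b) \<longleftrightarrow> z = x \<and> a \<le> z' \<and> z' \<le> b" for z z'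
  proof
    assume "(z,z') \<in> closed_segment (x,a) (x,b)"
    then have "z \<in> closed_segment x x" "z' \<in> closed_segment a b" using closed_segment_PairD by blast+
    then show "z = x \<and> a \<le> z' \<and> z' \<le> b" using assms closed_segment_eq_real_ivl1 by auto
  next
    assume h: "z = x \<and> a \<le> z' \<and> z' \<le> b"
    then have "z' \<in> closed_segment a b" using assms closed_segment_eq_real_ivl1 by auto
    then obtain u where u: "0 \<le> u" "u \<le> 1" "z' = (1-u)*a + u*b" by (auto simp: closed_segment_def)
    then show "(z,z') \<in> closed_segment (x,a) (x,b)" using h
      by (auto simp: closed_segment_def algebra_simps intro!: exI[of _ u])
  qed
  then show ?thesis by auto
qed

lemma hseg_def2: "hseg m n = closed_segment (of_int m - 1/2, of_int n + 1/2) (of_int m + 3/2, of_int n + 1/2)"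
  by (subst seg_h) (auto simp: hseg_def)
lemma vseg_def2: "vseg m n = closed_segment (of_int m + 1/2, of_int n - 1/2) (of_int m + 1/2, of_int n + 3/2)"
  by (subst seg_v) (auto simp: vseg_def)

definition hpres :: "config \<Rightarrow> int \<Rightarrow> int \<Rightarrow> bool" where
  "hpres \<omega> m n \<longleftrightarrow> black m n \<and> \<omega> (m,n+1) = \<omega> (m+1,n+1) \<and> \<omega> (m,n) = \<omega> (m+1,n) \<and> \<omega> (m,n+1) \<noteq> \<omega> (m,n)"
definition vpres :: "config \<Rightarrow> int \<Rightarrow> int \<Rightarrow> bool" where
  "vpres \<omega> m n \<longleftrightarrow> black m n \<and> \<omega> (m,n) = \<omega> (m,n+1) \<and> \<omega> (m+1,n) = \<omega> (m+1,n+1) \<and> \<omega> (m,n) \<noteq> \<omega> (m+1,n)"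

lemma L_vert_cases:
  assumes "p \<in> L1_vert \<union> L2_vert"
  shows "\<exists>a b::int. p = (of_int a - 1/2, of_int b + 1/2) \<and> even (a + b)"
  using assms unfolding L1_vert_def L2_vert_def by auto

lemma edge_in_all_h:
  assumes "black m n" shows "hseg m n \<in> all_edges"
proof -
  let ?p = "(real_of_int m - 1/2, real_of_int n + 1/2)" and ?q = "(real_of_int m + 3/2, real_of_int n + 1/2)"
  have d: "dist ?p ?q = 2" by (simp add: dist_Pair_Pair dist_real_def)
  have q: "?q = (real_of_int (m+2) - 1/2, real_of_int n + 1/2)" by simp
  show ?thesis
  proof (cases "even m")
    case True
    with assms have "even n" unfolding black_def by auto
    then have "?p \<in> L1_vert" "?q \<in> L1_vert" using True unfolding L1_vert_def q
      by (fastforce, metis (mono_tags, lifting) even_add even_numeral mem_Collect_eq q)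
    then show ?thesis unfolding all_edges_def lat_edges_def hseg_def2 using d by blast
  next
    case False
    with assms have "odd n" unfolding black_def by auto
    then have "?p \<in> L2_vert" "?q \<in> L2_vert" using False unfolding L2_vert_def q
      by (fastforce, metis (mono_tags, lifting) odd_add even_numeral mem_Collect_eq q)
    then show ?thesis unfolding all_edges_def lat_edges_def hseg_def2 using d by blast
  qed
qed

lemma edge_in_all_v:
  assumes "black m n" shows "vseg m n \<in> all_edges"
proof -
  let ?p = "(real_of_int m + 1/2, real_of_int n - 1/2)" and ?q = "(real_of_int m + 1/2, real_of_int n + 3/2)"
  have d: "dist ?p ?q = 2" by (simp add: dist_Pair_Pair dist_real_def)
  have p: "?p = (real_of_int (m+1) - 1/2, real_of_int (n-1) + 1/2)" by simp
  have q: "?q = (real_of_int (m+1) - 1/2, real_of_int (n+1) + 1/2)" by simp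
  show ?thesis
  proof (cases "even (m+1)")
    case True
    with assms have "even (n+1)" "even (n-1)" unfolding black_def by auto
    then have "?p \<in> L1_vert" "?q \<in> L1_vert" using True unfolding L1_vert_def 
      by (subst p, blast, subst q, blast)
    then show ?thesis unfolding all_edges_def lat_edges_def vseg_def2 using d by blast
  next
    case False
    with assms have "odd (n+1)" "odd (n-1)" unfolding black_def by auto
    then have "?p \<in> L2_vert" "?q \<in> L2_vert" using False unfolding L2_vert_def 
      by (subst p, blast, subst q, blast)
    then show ?thesis unfolding all_edges_def lat_edges_def vseg_def2 using d by blast
  qed
qed

lemma all_edges_dist:
  assumes "e \<in> all_edges" "e = closed_segment p q"
  shows "dist p q = 2"
proof -
  from assms(1) obtain p' q' where "e = closed_segment p' q'" "dist p' q' = 2"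
    unfolding all_edges_def lat_edges_def by blast
  with assms(2) have "{p,q} = {p',q'}" by simp
  then show ?thesis using \<open>dist p' q' = 2\<close> by (auto simp: doubleton_eq_iff dist_commute)
qed

lemma present_char:
  "phi \<omega> e \<longleftrightarrow> (\<exists>m n. hpres \<omega> m n \<and> e = hseg m n) \<or> (\<exists>m n. vpres \<omega> m n \<and> e = vseg m n)"
proof
  assume "phi \<omega> e"
  then obtain p q m n where e: "e \<in> all_edges" "e = closed_segment p q" "black m n"
     "midpoint p q = face_center m n" and
     c: "(snd p = snd q \<and> \<omega> (m,n+1) = \<omega> (m+1,n+1) \<and> \<omega> (m,n) = \<omega> (m+1,n)
            \<and> \<omega> (m,n+1) \<noteq> \<omega> (m,n)) \<or>
         (fst p = fst q \<and> \<omega> (m,n) = \<omega> (m,n+1) \<and> \<omega> (m+1,n) = \<omega> (m+1,n+1)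
            \<and> \<omega> (m,n) \<noteq> \<omega> (m+1,n))"
    unfolding phi_def by blast
  have d: "dist p q = 2" using all_edges_dist e by blast
  obtain x1 y1 x2 y2 where pq: "p = (x1,y1)" "q = (x2,y2)" by (cases p, cases q)
  have mid: "x1 + x2 = 2 * of_int m + 1" "y1 + y2 = 2 * of_int n + 1"
    using e(4) unfolding pq midpoint_def face_center_def by (auto simp: field_simps)
  from c show "(\<exists>m n. hpres \<omega> m n \<and> e = hseg m n) \<or> (\<exists>m n. vpres \<omega> m n \<and> e = vseg m n)"
  proof
    assume h: "snd p = snd q \<and> \<omega> (m,n+1) = \<omega> (m+1,n+1) \<and> \<omega> (m,n) = \<omega> (m+1,n) \<and> \<omega> (m,n+1) \<noteq> \<omega> (m,n)"
    then have y: "y1 = y2" using pq by simp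
    then have "\<bar>x1 - x2\<bar> = 2" using d unfolding pq by (simp add: dist_Pair_Pair dist_real_def)
    then have "(x1 = of_int m - 1/2 \<and> x2 = of_int m + 3/2) \<or> (x2 = of_int m - 1/2 \<and> x1 = of_int m + 3/2)"
      using mid by (auto simp: abs_if split: if_splits)
    moreover have "y1 = of_int n + 1/2" using mid y by simp
    ultimately have "e = hseg m n" unfolding hseg_def2 e(2) pq using y
      by (auto simp: closed_segment_commute)
    moreover have "hpres \<omega> m n" using h e(3) unfolding hpres_def by simp
    ultimately show ?thesis by blast
  next
    assume h: "fst p = fst q \<and> \<omega> (m,n) = \<omega> (m,n+1) \<and> \<omega> (m+1,n) = \<omega> (m+1,n+1) \<and> \<omega> (m,n) \<noteq> \<omega> (m+1,n)"
    then have x: "x1 = x2" using pq by simp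
    then have "\<bar>y1 - y2\<bar> = 2" using d unfolding pq by (simp add: dist_Pair_Pair dist_real_def)
    then have "(y1 = of_int n - 1/2 \<and> y2 = of_int n + 3/2) \<or> (y2 = of_int n - 1/2 \<and> y1 = of_int n + 3/2)"
      using mid by (auto simp: abs_if split: if_splits)
    moreover have "x1 = of_int m + 1/2" using mid x by simp
    ultimately have "e = vseg m n" unfolding vseg_def2 e(2) pq using x
      by (auto simp: closed_segment_commute)
    moreover have "vpres \<omega> m n" using h e(3) unfolding vpres_def by simp
    ultimately show ?thesis by blast
  qed
next
  assume "(\<exists>m n. hpres \<omega> m n \<and> e = hseg m n) \<or> (\<exists>m n. vpres \<omega> m n \<and> e = vseg m n)"
  then show "phi \<omega> e"
  proof (elim disjE exE conjE)
    fix m n assume h: "hpres \<omega> m n" "e = hseg m n"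
    show "phi \<omega> e" unfolding phi_def
      apply (rule conjI)
      using h edge_in_all_h hpres_def apply blast
      apply (rule exI[of _ "(real_of_int m - 1/2, real_of_int n + 1/2)"])
      apply (rule exI[of _ "(real_of_int m + 3/2, real_of_int n + 1/2)"])
      apply (rule exI[of _ m], rule exI[of _ n])
      using h by (auto simp: hseg_def2 hpres_def midpoint_def face_center_def field_simps)
  next
    fix m n assume h: "vpres \<omega> m n" "e = vseg m n"
    show "phi \<omega> e" unfolding phi_def
      apply (rule conjI)
      using h edge_in_all_v vpres_def apply blast
      apply (rule exI[of _ "(real_of_int m + 1/2, real_of_int n - 1/2)"])
      apply (rule exI[of _ "(real_of_int m + 1/2, real_of_int n + 3/2)"])
      apply (rule exI[of _ m], rule exI[of _ n])
      using h by (auto simp: vseg_def2 vpres_def midpoint_def face_center_def field_simps)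
  qed
qed



definition Pset :: "config \<Rightarrow> (real \<times> real) set" where
  "Pset \<omega> = \<Union> (present_edges \<omega>)"

lemma mem_Pset: "x \<in> Pset \<omega> \<longleftrightarrow> (\<exists>m n. (hpres \<omega> m n \<and> x \<in> hseg m n) \<or> (vpres \<omega> m n \<and> x \<in> vseg m n))"
  unfolding Pset_def present_edges_def mem_Collect_eq Union_iff present_char by blast

definition cell :: "vertex \<Rightarrow> (real \<times> real) set" where
  "cell u = {p. \<bar>fst p - of_int (fst u)\<bar> \<le> 1/2 \<and> \<bar>snd p - of_int (snd u)\<bar> \<le> 1/2}"

lemma bounded_coords:
  fixes S :: "(real \<times> real) set"
  assumes "bounded S" obtains r where "\<And>y. y \<in> S \<Longrightarrow> \<bar>fst y\<bar> \<le> r \<and> \<bar>snd y\<bar> \<le> r"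
proof -
  from assms obtain r where r: "\<And>y. y \<in> S \<Longrightarrow> norm y \<le> r" unfolding bounded_iff by blast
  have "\<bar>fst y\<bar> \<le> norm y" "\<bar>snd y\<bar> \<le> norm y" for y :: "real \<times> real"
  proof -
    show "\<bar>fst y\<bar> \<le> norm y" using norm_fst_le[of "fst y" "snd y"] by simp
    show "\<bar>snd y\<bar> \<le> norm y" using norm_snd_le[of "snd y" "fst y"] by simp
  qed
  then show ?thesis using that r by (meson order_trans)
qed

lemma finite_int_box: "finite {(m::int,n::int). \<bar>real_of_int m\<bar> \<le> r \<and> \<bar>real_of_int n\<bar> \<le> r}"
proof -
  let ?N = "\<lceil>r\<rceil>"
  have "{(m::int,n::int). \<bar>real_of_int m\<bar> \<le> r \<and> \<bar>real_of_int n\<bar> \<le> r} \<subseteq> {-?N..?N} \<times> {-?N..?N}"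
    by (auto simp: abs_le_iff) (linarith+)
  then show ?thesis by (rule finite_subset) simp
qed

lemma finite_hv_bounded:
  assumes "bounded S"
  shows "finite {(m,n). hseg m n \<inter> S \<noteq> {}}" "finite {(m,n). vseg m n \<inter> S \<noteq> {}}"
    "finite {u. cell u \<inter> S \<noteq> {}}"
proof -
  obtain r where r: "\<And>y. y \<in> S \<Longrightarrow> \<bar>fst y\<bar> \<le> r \<and> \<bar>snd y\<bar> \<le> r" using bounded_coords assms by blast
  have "\<bar>real_of_int m\<bar> \<le> r+2 \<and> \<bar>real_of_int n\<bar> \<le> r+2" if h: "hseg m n \<inter> S \<noteq> {}" for m n
  proof -
    obtain y where "y \<in> hseg m n" "y \<in> S" using h by blast
    then have "\<bar>fst y\<bar> \<le> r" "\<bar>snd y\<bar> \<le> r" "y \<in> hseg m n" using r by auto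
    then show ?thesis unfolding hseg_def by (simp, arith)
  qed
  then have "{(m,n). hseg m n \<inter> S \<noteq> {}} \<subseteq> {(m::int,n::int). \<bar>real_of_int m\<bar> \<le> r+2 \<and> \<bar>real_of_int n\<bar> \<le> r+2}"
    by (auto simp only: subset_iff mem_Collect_eq split: prod.splits)
  then show "finite {(m,n). hseg m n \<inter> S \<noteq> {}}" by (rule finite_subset[OF _ finite_int_box])
  have "\<bar>real_of_int m\<bar> \<le> r+2 \<and> \<bar>real_of_int n\<bar> \<le> r+2" if h: "vseg m n \<inter> S \<noteq> {}" for m n
  proof -
    obtain y where "y \<in> vseg m n" "y \<in> S" using h by blast
    then have "\<bar>fst y\<bar> \<le> r" "\<bar>snd y\<bar> \<le> r" "y \<in> vseg m n" using r by auto
    then show ?thesis unfolding vseg_def by (simp, arith)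
  qed
  then have "{(m,n). vseg m n \<inter> S \<noteq> {}} \<subseteq> {(m::int,n::int). \<bar>real_of_int m\<bar> \<le> r+2 \<and> \<bar>real_of_int n\<bar> \<le> r+2}"
    by (auto simp only: subset_iff mem_Collect_eq split: prod.splits)
  then show "finite {(m,n). vseg m n \<inter> S \<noteq> {}}" by (rule finite_subset[OF _ finite_int_box])
  have "\<bar>real_of_int (fst u)\<bar> \<le> r+2 \<and> \<bar>real_of_int (snd u)\<bar> \<le> r+2" if h: "cell u \<inter> S \<noteq> {}" for u
  proof -
    obtain y where "y \<in> cell u" "y \<in> S" using h by blast
    then have "\<bar>fst y - of_int (fst u)\<bar> \<le> 1/2" "\<bar>snd y - of_int (snd u)\<bar> \<le> 1/2" "\<bar>fst y\<bar> \<le> r" "\<bar>snd y\<bar> \<le> r"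
      using r unfolding cell_def by auto
    then show ?thesis by arith
  qed
  have "{u. cell u \<inter> S \<noteq> {}} \<subseteq> {(m::int,n::int). \<bar>real_of_int m\<bar> \<le> r+2 \<and> \<bar>real_of_int n\<bar> \<le> r+2}"
  proof (rule subsetI)
    fix u assume "u \<in> {u. cell u \<inter> S \<noteq> {}}"
    then have "\<bar>real_of_int (fst u)\<bar> \<le> r+2 \<and> \<bar>real_of_int (snd u)\<bar> \<le> r+2"
      using \<open>\<And>u. cell u \<inter> S \<noteq> {} \<Longrightarrow> _\<close> by blast
    then show "u \<in> {(m::int,n::int). \<bar>real_of_int m\<bar> \<le> r+2 \<and> \<bar>real_of_int n\<bar> \<le> r+2}"
      by (cases u) simp
  qed
  then show "finite {u. cell u \<inter> S \<noteq> {}}" by (rule finite_subset[OF _ finite_int_box])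
qed

lemma finite_present_bounded:
  assumes "bounded S" shows "finite {e. phi \<omega> e \<and> e \<inter> S \<noteq> {}}"
proof -
  let ?H = "{(m,n). hseg m n \<inter> S \<noteq> {}}" and ?V = "{(m,n). vseg m n \<inter> S \<noteq> {}}"
  have "{e. phi \<omega> e \<and> e \<inter> S \<noteq> {}} \<subseteq> case_prod hseg ` ?H \<union> case_prod vseg ` ?V"
  proof
    fix e assume "e \<in> {e. phi \<omega> e \<and> e \<inter> S \<noteq> {}}"
    then have ph: "phi \<omega> e" and ne: "e \<inter> S \<noteq> {}" by auto
    from ph[unfolded present_char] obtain m n where "e = hseg m n \<or> e = vseg m n" by blast
    then show "e \<in> case_prod hseg ` ?H \<union> case_prod vseg ` ?V"
    proof
      assume h: "e = hseg m n"
      then have "(m,n) \<in> ?H" using ne by simp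
      then have "case_prod hseg (m,n) \<in> case_prod hseg ` ?H" by (rule imageI)
      then show ?thesis using h by simp
    next
      assume h: "e = vseg m n"
      then have "(m,n) \<in> ?V" using ne by simp
      then have "case_prod vseg (m,n) \<in> case_prod vseg ` ?V" by (rule imageI)
      then show ?thesis using h by simp
    qed
  qed
  moreover have "finite (case_prod hseg ` ?H \<union> case_prod vseg ` ?V)"
    using finite_hv_bounded[OF assms] by simp
  ultimately show ?thesis by (rule finite_subset)
qed

lemma closed_Union_locfin:
  fixes F :: "'a::metric_space set set"
  assumes "\<And>X. X \<in> F \<Longrightarrow> closed X" "\<And>x. finite {X\<in>F. X \<inter> ball x 1 \<noteq> {}}"
  shows "closed (\<Union>F)"
  unfolding closed_def open_contains_ball
proof (intro ballI)
  fix x assume x: "x \<in> - \<Union>F"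
  let ?G = "{X\<in>F. X \<inter> ball x 1 \<noteq> {}}"
  have "closed (\<Union>?G)" using assms by (intro closed_Union) auto
  then have o: "open (- \<Union>?G)" by (simp add: open_Compl)
  have "x \<in> - \<Union>?G" using x by auto
  then have "\<exists>e>0. ball x e \<subseteq> - \<Union>?G" by (rule open_contains_ball_eq[OF o, THEN iffD1])
  then obtain e where e: "e > 0" "ball x e \<subseteq> - \<Union>?G" by blast
  have "ball x (min e 1) \<subseteq> - \<Union>F"
  proof
    fix y assume y: "y \<in> ball x (min e 1)"
    then have y1: "y \<in> ball x 1" and ye: "y \<in> ball x e" by auto
    show "y \<in> - \<Union>F"
    proof
      assume "y \<in> \<Union>F"
      then obtain X where "X \<in> F" "y \<in> X" by blast
      then have "X \<in> ?G" using y1 by blast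
      then show False using e(2) ye \<open>y \<in> X\<close> by blast
    qed
  qed
  then show "\<exists>e>0. ball x e \<subseteq> - \<Union>F" using e(1) by (intro exI[of _ "min e 1"]) auto
qed

lemma closed_hseg: "closed (hseg m n)" unfolding hseg_def2 by simp
lemma closed_vseg: "closed (vseg m n)" unfolding vseg_def2 by simp
lemma connected_hseg: "connected (hseg m n)" unfolding hseg_def2 by simp
lemma connected_vseg: "connected (vseg m n)" unfolding vseg_def2 by simp

lemma closed_cell: "closed (cell u)"
proof -
  have "cell u = {p. \<bar>fst p - of_int (fst u)\<bar> \<le> 1/2} \<inter> {p. \<bar>snd p - of_int (snd u)\<bar> \<le> 1/2}"
    unfolding cell_def by auto
  moreover have "closed {p::real\<times>real. \<bar>fst p - of_int (fst u)\<bar> \<le> 1/2}"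
    by (intro closed_Collect_le continuous_intros)
  moreover have "closed {p::real\<times>real. \<bar>snd p - of_int (snd u)\<bar> \<le> 1/2}"
    by (intro closed_Collect_le continuous_intros)
  ultimately show ?thesis by auto
qed

lemma closed_Pset: "closed (Pset \<omega>)"
  unfolding Pset_def
proof (rule closed_Union_locfin)
  fix X assume "X \<in> present_edges \<omega>"
  then show "closed X" using present_char closed_hseg closed_vseg unfolding present_edges_def by auto
next
  fix x
  show "finite {X \<in> present_edges \<omega>. X \<inter> ball x 1 \<noteq> {}}"
    using finite_present_bounded[of "ball x 1" \<omega>] unfolding present_edges_def by simp
qed

definition SA :: "vertex set \<Rightarrow> (real \<times> real) set" where
  "SA A = \<Union> (cell ` A)"

lemma closed_SA: "closed (SA A)"
  unfolding SA_def
proof (rule closed_Union_locfin)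
  show "\<And>X. X \<in> cell ` A \<Longrightarrow> closed X" using closed_cell by auto
  fix x
  have "{X \<in> cell ` A. X \<inter> ball x 1 \<noteq> {}} \<subseteq> cell ` {u. cell u \<inter> ball x 1 \<noteq> {}}" by auto
  then show "finite {X \<in> cell ` A. X \<inter> ball x 1 \<noteq> {}}"
    by (rule finite_subset) (use finite_hv_bounded(3)[of "ball x 1"] in auto)
qed

lemma cell_cover: "\<exists>u. p \<in> cell u"
proof -
  let ?u = "(round (fst p), round (snd p))"
  have "p \<in> cell ?u" unfolding cell_def using of_int_round_abs_le[of "fst p"] of_int_round_abs_le[of "snd p"]
    by (simp add: abs_minus_commute)
  then show ?thesis by blast
qed

lemma SA_Un_compl: "SA A \<union> SA (-A) = UNIV"
proof -
  have "p \<in> SA A \<union> SA (-A)" for p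
  proof -
    obtain u where "p \<in> cell u" using cell_cover by blast
    then show ?thesis unfolding SA_def by (metis ComplI UN_I UnI1 UnI2)
  qed
  then show ?thesis by auto
qed

lemma abs_half_iff: "\<bar>x - c\<bar> \<le> 1/2 \<longleftrightarrow> c - 1/2 \<le> x \<and> x \<le> c + 1/2" for x c :: real
  unfolding abs_le_iff by auto

lemma mem_cell: "p \<in> cell u \<longleftrightarrow> of_int (fst u) - 1/2 \<le> fst p \<and> fst p \<le> of_int (fst u) + 1/2
   \<and> of_int (snd u) - 1/2 \<le> snd p \<and> snd p \<le> of_int (snd u) + 1/2"
  unfolding cell_def mem_Collect_eq abs_half_iff by (simp only: conj_assoc)

lemma cell_Times: "cell u = {of_int (fst u) - 1/2 .. of_int (fst u) + 1/2} \<times> {of_int (snd u) - 1/2 .. of_int (snd u) + 1/2}"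
proof -
  show ?thesis unfolding set_eq_iff mem_Times_iff atLeastAtMost_iff mem_cell by simp
qed

lemma compact_cell: "compact (cell u)"
  unfolding cell_Times by (intro compact_Times) auto

lemma convex_cell: "convex (cell u)"
  unfolding cell_Times by (intro convex_Times) auto

lemma connected_cell: "connected (cell u)"
  using convex_cell convex_connected by blast

lemma vpt_cell: "vpt u \<in> cell u"
  unfolding cell_def vpt_def by simp



abbreviation reach :: "config \<Rightarrow> vertex \<Rightarrow> vertex \<Rightarrow> bool" where
  "reach \<omega> \<equiv> (same_step \<omega>)\<^sup>*\<^sup>*"

lemma same_step_sym: "same_step \<omega> u w \<Longrightarrow> same_step \<omega> w u"
  unfolding same_step_def grid_adj_def by (simp add: abs_minus_commute)

lemma reach_sym: "reach \<omega> u w \<Longrightarrow> reach \<omega> w u"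
proof (induction rule: rtranclp_induct)
  case base then show ?case by simp
next
  case (step y z) then show ?case using same_step_sym converse_rtranclp_into_rtranclp by metis
qed

lemma reach_val: "reach \<omega> u w \<Longrightarrow> \<omega> w = \<omega> u"
  by (induction rule: rtranclp_induct) (auto simp: same_step_def)

lemma step_h: "\<omega> (a,b) = \<omega> (a+1,b) \<Longrightarrow> same_step \<omega> (a,b) (a+1,b)"
  unfolding same_step_def grid_adj_def by simp
lemma step_v: "\<omega> (a,b) = \<omega> (a,b+1) \<Longrightarrow> same_step \<omega> (a,b) (a,b+1)"
  unfolding same_step_def grid_adj_def by simp

lemma Omega_face:
  assumes "\<omega> \<in> Omega" "black m n"
  shows "(\<omega> (m,n), \<omega> (m,n+1), \<omega> (m+1,n+1), \<omega> (m+1,n)) \<in> allowed"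
  using assms unfolding Omega_def by blast

lemma side_h':
  assumes "\<omega> \<in> Omega" "\<omega> (a,b) \<noteq> \<omega> (a,b+1)"
  shows "\<exists>i. (i = a - 1 \<or> i = a) \<and> hpres \<omega> i b"
proof (cases "black a b")
  case True
  then have "(\<omega> (a,b), \<omega> (a,b+1), \<omega> (a+1,b+1), \<omega> (a+1,b)) \<in> allowed" using Omega_face assms(1) by blast
  then have "hpres \<omega> a b" using assms(2) True unfolding allowed_def hpres_def by auto
  then show ?thesis by blast
next
  case False
  then have bl: "black (a-1) b" unfolding black_def by simp
  then have "(\<omega> (a-1,b), \<omega> (a-1,b+1), \<omega> (a-1+1,b+1), \<omega> (a-1+1,b)) \<in> allowed" using Omega_face assms(1) by blast
  then have "hpres \<omega> (a-1) b" using assms(2) bl unfolding allowed_def hpres_def by auto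
  then show ?thesis by blast
qed

lemma side_v':
  assumes "\<omega> \<in> Omega" "\<omega> (a,b) \<noteq> \<omega> (a+1,b)"
  shows "\<exists>j. (j = b - 1 \<or> j = b) \<and> vpres \<omega> a j"
proof (cases "black a b")
  case True
  then have "(\<omega> (a,b), \<omega> (a,b+1), \<omega> (a+1,b+1), \<omega> (a+1,b)) \<in> allowed" using Omega_face assms(1) by blast
  then have "vpres \<omega> a b" using assms(2) True unfolding allowed_def vpres_def by auto
  then show ?thesis by blast
next
  case False
  then have bl: "black a (b-1)" unfolding black_def by simp
  then have "(\<omega> (a,b-1), \<omega> (a,b-1+1), \<omega> (a+1,b-1+1), \<omega> (a+1,b-1)) \<in> allowed" using Omega_face assms(1) by blast
  then have "vpres \<omega> a (b-1)" using assms(2) bl unfolding allowed_def vpres_def by auto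
  then show ?thesis by blast
qed

lemma side_h:
  assumes "\<omega> \<in> Omega" "\<omega> (a,b) \<noteq> \<omega> (a,b+1)" "snd q = of_int b + 1/2" "\<bar>fst q - of_int a\<bar> \<le> 1/2"
  shows "q \<in> Pset \<omega>"
proof -
  obtain i where i: "i = a - 1 \<or> i = a" "hpres \<omega> i b" using side_h' assms(1,2) by blast
  have "q \<in> hseg i b" using i(1) assms(3,4) unfolding hseg_def abs_half_iff by auto
  then show ?thesis using i(2) mem_Pset by blast
qed

lemma side_v:
  assumes "\<omega> \<in> Omega" "\<omega> (a,b) \<noteq> \<omega> (a+1,b)" "fst q = of_int a + 1/2" "\<bar>snd q - of_int b\<bar> \<le> 1/2"
  shows "q \<in> Pset \<omega>"
proof -
  obtain j where j: "j = b - 1 \<or> j = b" "vpres \<omega> a j" using side_v' assms(1,2) by blast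
  have "q \<in> vseg a j" using j(1) assms(3,4) unfolding vseg_def abs_half_iff by auto
  then show ?thesis using j(2) mem_Pset by blast
qed

lemma cell_meet_base:
  assumes O: "\<omega> \<in> Omega" and p: "p \<in> cell (a,b)" "p \<in> cell (c,d)" and nr: "\<not> reach \<omega> (a,b) (c,d)"
    and cs: "(c = a \<and> d = b+1) \<or> (c = a+1 \<and> d = b) \<or> (c = a+1 \<and> d = b+1) \<or> (c = a+1 \<and> d = b-1)"
  shows "p \<in> Pset \<omega>"
proof -
  have px: "of_int a - 1/2 \<le> fst p" "fst p \<le> of_int a + 1/2" "of_int c - 1/2 \<le> fst p" "fst p \<le> of_int c + 1/2"
   and py: "of_int b - 1/2 \<le> snd p" "snd p \<le> of_int b + 1/2" "of_int d - 1/2 \<le> snd p" "snd p \<le> of_int d + 1/2"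
    using p unfolding mem_cell by auto
  have px': "\<bar>fst p - of_int a\<bar> \<le> 1/2" and py': "\<bar>snd p - of_int b\<bar> \<le> 1/2"
    using px py unfolding abs_half_iff by auto
  from cs show ?thesis
  proof (elim disjE conjE)
    assume h: "c = a" "d = b+1"
    then have "\<omega> (a,b) \<noteq> \<omega> (a,b+1)" using nr step_v by blast
    moreover have "snd p = of_int b + 1/2" using py h by (simp; linarith)
    ultimately show ?thesis using side_h O px' by blast
  next
    assume h: "c = a+1" "d = b"
    then have "\<omega> (a,b) \<noteq> \<omega> (a+1,b)" using nr step_h by blast
    moreover have "fst p = of_int a + 1/2" using px h by (simp; linarith)
    ultimately show ?thesis using side_v O py' by blast
  next
    assume h: "c = a+1" "d = b+1"
    have fp: "fst p = of_int a + 1/2" using px h by (simp; linarith)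
    have sp: "snd p = of_int b + 1/2" using py h by (simp; linarith)
    show ?thesis
    proof (cases "\<omega> (a,b) = \<omega> (a+1,b)")
      case False then show ?thesis using side_v[OF O False fp] sp by (simp add: abs_half_iff)
    next
      case True
      show ?thesis
      proof (cases "\<omega> (a+1,b) = \<omega> (a+1,b+1)")
        case True2: True
        have "reach \<omega> (a,b) (c,d)" using step_h[OF True] step_v[OF True2] h by auto
        with nr show ?thesis by blast
      next
        case False then show ?thesis using side_h[OF O False sp] fp by (simp add: abs_half_iff)
      qed
    qed
  next
    assume h: "c = a+1" "d = b-1"
    have fp: "fst p = of_int a + 1/2" using px h by (simp; linarith)
    have sp: "snd p = of_int (b-1) + 1/2" using py h by (simp; linarith)
    show ?thesis
    proof (cases "\<omega> (a,b) = \<omega> (a+1,b)")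
      case False then show ?thesis using side_v[OF O False fp] sp by (simp add: abs_half_iff)
    next
      case True
      show ?thesis
      proof (cases "\<omega> (a+1,b-1) = \<omega> (a+1,b-1+1)")
        case True2: True
        have "same_step \<omega> (a+1,b) (a+1,b-1)" using step_v[OF True2] same_step_sym by simp
        then have "reach \<omega> (a,b) (c,d)" using step_h[OF True] h by auto
        with nr show ?thesis by blast
      next
        case False then show ?thesis using side_h[OF O False sp] fp by (simp add: abs_half_iff)
      qed
    qed
  qed
qed

lemma cell_meet:
  assumes O: "\<omega> \<in> Omega" and p: "p \<in> cell u" "p \<in> cell w" and nr: "\<not> reach \<omega> u w"
  shows "p \<in> Pset \<omega>"
proof -
  obtain a b c d where uw: "u = (a,b)" "w = (c,d)" by (cases u, cases w)
  have "of_int a - 1/2 \<le> fst p" "fst p \<le> of_int a + 1/2" "of_int c - 1/2 \<le> fst p" "fst p \<le> of_int c + 1/2"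
   "of_int b - 1/2 \<le> snd p" "snd p \<le> of_int b + 1/2" "of_int d - 1/2 \<le> snd p" "snd p \<le> of_int d + 1/2"
    using p uw unfolding mem_cell by auto
  then have "real_of_int (c - a) \<le> real_of_int 1" "real_of_int (-1) \<le> real_of_int (c - a)"
     "real_of_int (d - b) \<le> real_of_int 1" "real_of_int (-1) \<le> real_of_int (d - b)" by simp_all
  then have "c - a \<le> 1" "-1 \<le> c - a" "d - b \<le> 1" "-1 \<le> d - b" using of_int_le_iff by blast+
  then have ca: "c = a - 1 \<or> c = a \<or> c = a + 1" and db: "d = b - 1 \<or> d = b \<or> d = b + 1" by presburger+
  have ne: "\<not> (c = a \<and> d = b)" using nr uw by auto
  have nr': "\<not> reach \<omega> (c,d) (a,b)" using nr uw reach_sym by blast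
  show ?thesis
  proof (cases "(c = a \<and> d = b+1) \<or> (c = a+1 \<and> d = b) \<or> (c = a+1 \<and> d = b+1) \<or> (c = a+1 \<and> d = b-1)")
    case True then show ?thesis using cell_meet_base[OF O] p nr uw by blast
  next
    case False
    then have "(a = c \<and> b = d+1) \<or> (a = c+1 \<and> b = d) \<or> (a = c+1 \<and> b = d+1) \<or> (a = c+1 \<and> b = d-1)"
      using ca db ne by presburger
    then show ?thesis using cell_meet_base[OF O, of p c d a b] p nr' uw by blast
  qed
qed

lemma compl_SA: "- SA A \<subseteq> SA (- A)"
proof
  fix x assume "x \<in> - SA A"
  moreover have "x \<in> SA A \<union> SA (-A)" using SA_Un_compl by simp
  ultimately show "x \<in> SA (-A)" by simp
qed

lemma closure_compl_SA: "closure (- SA A) \<subseteq> SA (- A)"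
  by (rule closure_minimal[OF compl_SA closed_SA])

lemma frontier_SA:
  assumes O: "\<omega> \<in> Omega" and cl: "\<And>u w. u \<in> A \<Longrightarrow> reach \<omega> u w \<Longrightarrow> w \<in> A"
  shows "frontier (SA A) \<subseteq> Pset \<omega>"
proof
  fix p assume "p \<in> frontier (SA A)"
  then have "p \<in> closure (SA A)" "p \<in> closure (- SA A)" unfolding frontier_closures by auto
  then have "p \<in> SA A" "p \<in> SA (-A)" using closed_SA closure_compl_SA closure_closed by auto
  then obtain u w where "u \<in> A" "w \<notin> A" "p \<in> cell u" "p \<in> cell w" unfolding SA_def by auto
  moreover have "\<not> reach \<omega> u w" using cl \<open>u \<in> A\<close> \<open>w \<notin> A\<close> by blast
  ultimately show "p \<in> Pset \<omega>" using cell_meet O by blast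
qed

lemma connected_reach_Union:
  fixes f :: "vertex \<Rightarrow> 'a::topological_space set"
  assumes c: "\<And>u. connected (f u)" and ne: "\<And>u. f u \<noteq> {}"
    and m: "\<And>u w. same_step \<omega> u w \<Longrightarrow> f u \<inter> f w \<noteq> {}"
  shows "connected (\<Union> (f ` {w. reach \<omega> v w}))"
proof -
  let ?U = "\<Union> (f ` {w. reach \<omega> v w})"
  obtain x0 where x0: "x0 \<in> f v" using ne by blast
  have "f w \<subseteq> connected_component_set ?U x0" if "reach \<omega> v w" for w
    using that
  proof (induction rule: rtranclp_induct)
    case base
    have "f v \<subseteq> ?U" by blast
    then show ?case by (rule connected_component_maximal[OF x0 c])
  next
    case (step y z)
    obtain q where q: "q \<in> f y" "q \<in> f z" using m[OF step(2)] by blast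
    have rz: "reach \<omega> v z" using step(1,2) by (rule rtranclp.rtrancl_into_rtrancl)
    have "f z \<subseteq> ?U" using rz by blast
    then have "f z \<subseteq> connected_component_set ?U q" by (rule connected_component_maximal[OF q(2) c])
    moreover have "q \<in> connected_component_set ?U x0" using step.IH q(1) by blast
    then have "connected_component_set ?U q = connected_component_set ?U x0" by (rule connected_component_eq)
    ultimately show ?case by simp
  qed
  then have "?U \<subseteq> connected_component_set ?U x0" by auto
  then have "?U = connected_component_set ?U x0" using connected_component_subset by blast
  then show ?thesis by (metis connected_connected_component)
qed



lemma infdist_eqI:
  fixes x :: "'a::metric_space"
  assumes "y0 \<in> A" "dist x y0 = d" "\<And>y. y \<in> A \<Longrightarrow> d \<le> dist x y"
  shows "infdist x A = d"
proof (rule antisym)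
  show "infdist x A \<le> d" using infdist_le[OF assms(1), of x] assms(2) by linarith
  have "A \<noteq> {}" using assms(1) by blast
  then have "infdist x A = (INF a\<in>A. dist x a)" by (rule infdist_notempty)
  moreover have "d \<le> (INF a\<in>A. dist x a)" using \<open>A \<noteq> {}\<close> assms(3) by (rule cINF_greatest)
  ultimately show "d \<le> infdist x A" by simp
qed

lemma dist_fst': "\<bar>fst x - fst y\<bar> \<le> dist x (y::real\<times>real)"
  using dist_fst_le[of x y] by (simp add: dist_real_def)
lemma dist_snd': "\<bar>snd x - snd y\<bar> \<le> dist x (y::real\<times>real)"
  using dist_snd_le[of x y] by (simp add: dist_real_def)

lemma infdist_hseg:
  assumes "fst w = m \<or> fst w = m + 1" "snd w = n \<or> snd w = n + 1"
  shows "infdist (vpt w) (hseg m n) = 1/2"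
proof (rule infdist_eqI)
  let ?y = "(real_of_int (fst w), real_of_int n + 1/2)"
  show "?y \<in> hseg m n" using assms(1) unfolding hseg_def by auto
  show "dist (vpt w) ?y = 1/2" using assms(2) unfolding vpt_def by (auto simp: dist_Pair_Pair dist_real_def)
  fix y assume "y \<in> hseg m n"
  then have "snd y = of_int n + 1/2" unfolding hseg_def by simp
  then have "\<bar>snd (vpt w) - snd y\<bar> = 1/2" using assms(2) unfolding vpt_def by auto
  then show "1/2 \<le> dist (vpt w) y" using dist_snd'[of "vpt w" y] by simp
qed

lemma infdist_vseg:
  assumes "fst w = m \<or> fst w = m + 1" "snd w = n \<or> snd w = n + 1"
  shows "infdist (vpt w) (vseg m n) = 1/2"
proof (rule infdist_eqI)
  let ?y = "(real_of_int m + 1/2, real_of_int (snd w))"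
  show "?y \<in> vseg m n" using assms(2) unfolding vseg_def by auto
  show "dist (vpt w) ?y = 1/2" using assms(1) unfolding vpt_def by (auto simp: dist_Pair_Pair dist_real_def)
  fix y assume "y \<in> vseg m n"
  then have "fst y = of_int m + 1/2" unfolding vseg_def by simp
  then have "\<bar>fst (vpt w) - fst y\<bar> = 1/2" using assms(1) unfolding vpt_def by auto
  then show "1/2 \<le> dist (vpt w) y" using dist_fst'[of "vpt w" y] by simp
qed

lemma contours_eq: "contours \<omega> = components (Pset \<omega>)"
  unfolding contours_def Pset_def by simp

lemma present_sub: "phi \<omega> e \<Longrightarrow> e \<subseteq> Pset \<omega>"
  unfolding Pset_def present_edges_def by blast

lemma present_props: "phi \<omega> e \<Longrightarrow> connected e \<and> compact e \<and> e \<noteq> {}"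
  unfolding present_char hseg_def2 vseg_def2 by auto

lemma edge_in_C:
  assumes "C \<in> contours \<omega>" "phi \<omega> e" "e \<inter> C \<noteq> {}"
  shows "e \<subseteq> C"
  using components_maximal[of C "Pset \<omega>" e] assms present_props present_sub contours_eq by (simp add: Int_commute)

lemma incidentI:
  assumes "w \<in> \<xi>" "phi \<omega> e" "e \<subseteq> C" "infdist (vpt w) e = 1/2"
  shows "incident \<omega> \<xi> C"
  unfolding incident_def contour_edges_def present_edges_def using assms by blast

lemma ile: fixes a b :: int assumes "real_of_int a < real_of_int b + 1" shows "a \<le> b"
proof -
  have "real_of_int a < real_of_int (b+1)" using assms by simp
  then have "a < b + 1" by (simp only: of_int_less_iff)
  then show ?thesis by simp
qed

lemma incident_meets:
  assumes "incident \<omega> \<xi> C"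
  shows "SA \<xi> \<inter> C \<noteq> {}"
proof -
  obtain v e where v: "v \<in> \<xi>" "e \<in> contour_edges \<omega> C" "infdist (vpt v) e = 1/2"
    using assms unfolding incident_def by blast
  then have ph: "phi \<omega> e" and eC: "e \<subseteq> C" unfolding contour_edges_def present_edges_def by auto
  then have "compact e" "e \<noteq> {}" using present_props by auto
  then obtain y where y: "y \<in> e" "\<And>z. z \<in> e \<Longrightarrow> dist (vpt v) y \<le> dist (vpt v) z"
    using distance_attains_inf[of e "vpt v"] compact_imp_closed by metis
  have "infdist (vpt v) e = dist (vpt v) y" by (rule infdist_eqI[OF y(1) refl y(2)])
  then have d: "dist (vpt v) y = 1/2" using v(3) by simp
  have "\<bar>fst (vpt v) - fst y\<bar> \<le> 1/2" "\<bar>snd (vpt v) - snd y\<bar> \<le> 1/2"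
    using dist_fst'[of "vpt v" y] dist_snd'[of "vpt v" y] d by auto
  then have "y \<in> cell v" unfolding cell_def vpt_def by (simp add: abs_minus_commute)
  then have "y \<in> SA \<xi>" using v(1) unfolding SA_def by blast
  then show ?thesis using y(1) eC by blast
qed



lemma reach_closed: "u \<in> {w. reach \<omega> v w} \<Longrightarrow> reach \<omega> u x \<Longrightarrow> x \<in> {w. reach \<omega> v w}"
  by auto

lemma step_closed: "u \<in> {w. reach \<omega> v w} \<Longrightarrow> same_step \<omega> u x \<Longrightarrow> x \<in> {w. reach \<omega> v w}"
  by (auto intro: rtranclp.rtrancl_into_rtrancl)

lemma meets_incident:
  assumes O: "\<omega> \<in> Omega" and xi: "\<xi> = {w. reach \<omega> v0 w}" and C: "C \<in> contours \<omega>"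
    and m: "SA \<xi> \<inter> C \<noteq> {}"
  shows "incident \<omega> \<xi> C"
proof -
  obtain p u where pu: "p \<in> cell u" "u \<in> \<xi>" "p \<in> C" using m unfolding SA_def by blast
  obtain u1 u2 where u: "u = (u1,u2)" by (cases u)
  have pc: "of_int u1 - 1/2 \<le> fst p" "fst p \<le> of_int u1 + 1/2" "of_int u2 - 1/2 \<le> snd p" "snd p \<le> of_int u2 + 1/2"
    using pu(1) u unfolding mem_cell by auto
  have "p \<in> Pset \<omega>" using pu(3) C in_components_subset contours_eq by blast
  then obtain m n where mn: "(hpres \<omega> m n \<and> p \<in> hseg m n) \<or> (vpres \<omega> m n \<and> p \<in> vseg m n)"
    unfolding mem_Pset by blast
  then show ?thesis
  proof
    assume h: "hpres \<omega> m n \<and> p \<in> hseg m n"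
    have ph: "phi \<omega> (hseg m n)" using h present_char by blast
    have eC: "hseg m n \<subseteq> C" using edge_in_C[OF C ph] h pu(3) by blast
    have hp: "snd p = of_int n + 1/2" "of_int m - 1/2 \<le> fst p" "fst p \<le> of_int m + 3/2"
      using h unfolding hseg_def by auto
    have "u2 \<le> n + 1" by (rule ile) (use pc hp in linarith)
    moreover have "n \<le> u2" by (rule ile) (use pc hp in linarith)
    ultimately have u2: "u2 = n \<or> u2 = n + 1" by linarith
    have "u1 \<le> m + 2" by (rule ile) (use pc hp in linarith)
    moreover have "m - 1 \<le> u1" by (rule ile) (use pc hp in linarith)
    ultimately have "u1 = m - 1 \<or> u1 = m \<or> u1 = m + 1 \<or> u1 = m + 2" by linarith
    then show ?thesis
    proof (elim disjE)
      assume "u1 = m" then show ?thesis using incidentI[OF pu(2) ph eC] infdist_hseg u u2 by simp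
    next
      assume "u1 = m + 1" then show ?thesis using incidentI[OF pu(2) ph eC] infdist_hseg u u2 by simp
    next
      assume u1: "u1 = m - 1"
      show ?thesis
      proof (cases "\<omega> (m-1,u2) = \<omega> (m,u2)")
        case True
        then have "same_step \<omega> u (m,u2)" using step_h[of \<omega> "m-1" u2] u u1 by simp
        then have "(m,u2) \<in> \<xi>" using step_closed pu(2) xi by blast
        then show ?thesis using incidentI[OF _ ph eC] infdist_hseg[of "(m,u2)"] u2 by simp
      next
        case False
        then have "\<omega> (m-1,u2) \<noteq> \<omega> (m-1+1,u2)" by simp
        then obtain j where j: "j = u2 - 1 \<or> j = u2" "vpres \<omega> (m-1) j" using side_v'[OF O] by blast
        have ph': "phi \<omega> (vseg (m-1) j)" using j present_char by blast
        have "p \<in> vseg (m-1) j" unfolding vseg_def using j(1) u2 pc hp u1 by auto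
        then have eC': "vseg (m-1) j \<subseteq> C" using edge_in_C[OF C ph'] pu(3) by blast
        show ?thesis using incidentI[OF pu(2) ph' eC'] infdist_vseg[of u "m-1" j] u u1 j(1) by auto
      qed
    next
      assume u1: "u1 = m + 2"
      show ?thesis
      proof (cases "\<omega> (m+1,u2) = \<omega> (m+2,u2)")
        case True
        then have "same_step \<omega> u (m+1,u2)" using step_h[of \<omega> "m+1" u2] same_step_sym u u1
          by (simp add: add.commute)
        then have "(m+1,u2) \<in> \<xi>" using step_closed pu(2) xi by blast
        then show ?thesis using incidentI[OF _ ph eC] infdist_hseg[of "(m+1,u2)"] u2 by simp
      next
        case False
        then have "\<omega> (m+1,u2) \<noteq> \<omega> (m+1+1,u2)" by (simp add: add.assoc)
        then obtain j where j: "j = u2 - 1 \<or> j = u2" "vpres \<omega> (m+1) j" using side_v'[OF O] by blast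
        have ph': "phi \<omega> (vseg (m+1) j)" using j present_char by blast
        have "p \<in> vseg (m+1) j" unfolding vseg_def using j(1) u2 pc hp u1 by auto
        then have eC': "vseg (m+1) j \<subseteq> C" using edge_in_C[OF C ph'] pu(3) by blast
        show ?thesis using incidentI[OF pu(2) ph' eC'] infdist_vseg[of u "m+1" j] u u1 j(1) by auto
      qed
    qed
  next
    assume h: "vpres \<omega> m n \<and> p \<in> vseg m n"
    have ph: "phi \<omega> (vseg m n)" using h present_char by blast
    have eC: "vseg m n \<subseteq> C" using edge_in_C[OF C ph] h pu(3) by blast
    have hp: "fst p = of_int m + 1/2" "of_int n - 1/2 \<le> snd p" "snd p \<le> of_int n + 3/2"
      using h unfolding vseg_def by auto
    have "u1 \<le> m + 1" by (rule ile) (use pc hp in linarith)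
    moreover have "m \<le> u1" by (rule ile) (use pc hp in linarith)
    ultimately have u1: "u1 = m \<or> u1 = m + 1" by linarith
    have "u2 \<le> n + 2" by (rule ile) (use pc hp in linarith)
    moreover have "n - 1 \<le> u2" by (rule ile) (use pc hp in linarith)
    ultimately have "u2 = n - 1 \<or> u2 = n \<or> u2 = n + 1 \<or> u2 = n + 2" by linarith
    then show ?thesis
    proof (elim disjE)
      assume "u2 = n" then show ?thesis using incidentI[OF pu(2) ph eC] infdist_vseg u u1 by simp
    next
      assume "u2 = n + 1" then show ?thesis using incidentI[OF pu(2) ph eC] infdist_vseg u u1 by simp
    next
      assume u2: "u2 = n - 1"
      show ?thesis
      proof (cases "\<omega> (u1,n-1) = \<omega> (u1,n)")
        case True
        then have "same_step \<omega> u (u1,n)" using step_v[of \<omega> u1 "n-1"] u u2 by simp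
        then have "(u1,n) \<in> \<xi>" using step_closed pu(2) xi by blast
        then show ?thesis using incidentI[OF _ ph eC] infdist_vseg[of "(u1,n)"] u1 by simp
      next
        case False
        then have "\<omega> (u1,n-1) \<noteq> \<omega> (u1,n-1+1)" by simp
        then obtain i where i: "i = u1 - 1 \<or> i = u1" "hpres \<omega> i (n-1)" using side_h'[OF O] by blast
        have ph': "phi \<omega> (hseg i (n-1))" using i present_char by blast
        have "p \<in> hseg i (n-1)" unfolding hseg_def using i(1) u1 pc hp u2 by auto
        then have eC': "hseg i (n-1) \<subseteq> C" using edge_in_C[OF C ph'] pu(3) by blast
        show ?thesis using incidentI[OF pu(2) ph' eC'] infdist_hseg[of u i "n-1"] u u2 i(1) by auto
      qed
    next
      assume u2: "u2 = n + 2"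
      show ?thesis
      proof (cases "\<omega> (u1,n+1) = \<omega> (u1,n+2)")
        case True
        then have "same_step \<omega> u (u1,n+1)" using step_v[of \<omega> u1 "n+1"] same_step_sym u u2
          by (simp add: add.commute)
        then have "(u1,n+1) \<in> \<xi>" using step_closed pu(2) xi by blast
        then show ?thesis using incidentI[OF _ ph eC] infdist_vseg[of "(u1,n+1)"] u1 by simp
      next
        case False
        then have "\<omega> (u1,n+1) \<noteq> \<omega> (u1,n+1+1)" by (simp add: add.assoc)
        then obtain i where i: "i = u1 - 1 \<or> i = u1" "hpres \<omega> i (n+1)" using side_h'[OF O] by blast
        have ph': "phi \<omega> (hseg i (n+1))" using i present_char by blast
        have "p \<in> hseg i (n+1)" unfolding hseg_def using i(1) u1 pc hp u2 by auto
        then have eC': "hseg i (n+1) \<subseteq> C" using edge_in_C[OF C ph'] pu(3) by blast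
        show ?thesis using incidentI[OF pu(2) ph' eC'] infdist_hseg[of u i "n+1"] u u2 i(1) by auto
      qed
    qed
  qed
qed



lemma infinite_contour_unbounded:
  assumes "infinite_contour \<omega> C" shows "\<not> bounded C"
proof
  assume b: "bounded C"
  have "contour_edges \<omega> C \<subseteq> {e. phi \<omega> e \<and> e \<inter> C \<noteq> {}}"
    unfolding contour_edges_def present_edges_def using present_props by fastforce
  then have "finite (contour_edges \<omega> C)" using finite_present_bounded[OF b] by (rule finite_subset)
  then show False using assms unfolding infinite_contour_def by blast
qed

lemma cell_adj_meet:
  assumes "same_step \<omega> u w" shows "cell u \<inter> cell w \<noteq> {}"
proof -
  have g: "\<bar>fst u - fst w\<bar> + \<bar>snd u - snd w\<bar> = 1" using assms unfolding same_step_def grid_adj_def by simp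
  let ?q = "((of_int (fst u) + of_int (fst w))/2, (of_int (snd u) + of_int (snd w))/2) :: real \<times> real"
  have a1: "\<bar>fst u - fst w\<bar> \<le> 1" "\<bar>snd u - snd w\<bar> \<le> 1" using g by linarith+
  then have "\<bar>real_of_int (fst u) - real_of_int (fst w)\<bar> \<le> 1" "\<bar>real_of_int (snd u) - real_of_int (snd w)\<bar> \<le> 1"
    by (metis of_int_abs of_int_diff of_int_le_1_iff)+
  then have "?q \<in> cell u" "?q \<in> cell w" unfolding mem_cell by (simp_all add: abs_le_iff)
  then show ?thesis by blast
qed

lemma connected_SA:
  "connected (SA {w. reach \<omega> v w})"
  unfolding SA_def
  by (rule connected_reach_Union[OF connected_cell _ cell_adj_meet]) (use vpt_cell in blast)

lemma compact_SA: "finite A \<Longrightarrow> compact (SA A)"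
  unfolding SA_def using compact_cell by blast

lemma unbounded_point:
  fixes C :: "(real \<times> real) set"
  assumes "\<not> bounded C" shows "\<exists>x\<in>C. x \<notin> cball 0 r"
  using assms unfolding bounded_iff by (force simp: mem_cball_0 not_le)

lemma connected_outside_cball: "connected (- cball (0::real\<times>real) r)"
  by (rule connected_complement_bounded_convex) auto

lemma thm3:
  assumes O: "\<omega> \<in> Omega" and fin: "finite \<xi>" and xi: "\<xi> = {w. reach \<omega> v w}"
    and C1: "C1 \<in> contours \<omega>" and C2: "C2 \<in> contours \<omega>" and ub: "\<not> bounded C1" "\<not> bounded C2"
    and m1: "SA \<xi> \<inter> C1 \<noteq> {}" and m2: "SA \<xi> \<inter> C2 \<noteq> {}"
  shows "C1 = C2"
proof -
  let ?S = "SA \<xi>"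
  have cS: "connected ?S" using connected_SA xi by simp
  have "compact ?S" using compact_SA fin by blast
  then obtain r where r: "?S \<subseteq> ball 0 r" using bounded_subset_ballD compact_imp_bounded by blast
  let ?B = "- cball (0::real\<times>real) r"
  obtain b1 where b1: "b1 \<in> C1" "b1 \<in> ?B" using unbounded_point[OF ub(1)] by blast
  obtain b2 where b2: "b2 \<in> C2" "b2 \<in> ?B" using unbounded_point[OF ub(2)] by blast
  have BS: "?B \<subseteq> - ?S" using r by auto
  let ?W = "connected_component_set (- ?S) b1"
  have Wc: "?W \<in> components (- ?S)" using BS b1 by (intro componentsI) auto
  have BW: "?B \<subseteq> ?W" by (rule connected_component_maximal) (use b1 BS connected_outside_cball in auto)
  have WS: "?W \<inter> ?S = {}" using connected_component_subset by blast
  have cF: "connected (frontier ?W)" by (rule connected_frontier_component_complement[OF cS Wc])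
  have cl: "\<And>u w. u \<in> \<xi> \<Longrightarrow> reach \<omega> u w \<Longrightarrow> w \<in> \<xi>" using xi by auto
  have "frontier ?W \<subseteq> frontier ?S" using frontier_of_components_subset[OF Wc] by simp
  then have FP: "frontier ?W \<subseteq> Pset \<omega>" using frontier_SA[OF O cl] by (rule order_trans)
  have cC1: "connected C1" using in_components_connected[OF C1[unfolded contours_eq]] .
  have cC2: "connected C2" using in_components_connected[OF C2[unfolded contours_eq]] .
  have "C1 \<inter> frontier ?W \<noteq> {}"
    by (rule connected_Int_frontier[OF cC1]) (use b1 BW m1 WS in blast)+
  then have F1: "frontier ?W \<subseteq> C1"
    using components_maximal[OF C1[unfolded contours_eq] cF FP] by blast
  have "C2 \<inter> frontier ?W \<noteq> {}"
    by (rule connected_Int_frontier[OF cC2]) (use b2 BW m2 WS in blast)+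
  then have "C1 \<inter> C2 \<noteq> {}" using F1 by blast
  then show ?thesis using components_nonoverlap[OF C1[unfolded contours_eq] C2[unfolded contours_eq]] by blast
qed



lemma cluster_form: "cluster \<omega> \<xi> \<Longrightarrow> \<exists>v. \<xi> = {w. reach \<omega> v w}"
  unfolding cluster_def by blast

lemma main2:
  assumes O: "\<omega> \<in> Omega" and C1: "C1 \<in> contours \<omega>" and C2: "C2 \<in> contours \<omega>" and ne: "C1 \<noteq> C2"
    and ub1: "\<not> bounded C1" and ub2: "\<not> bounded C2"
  shows "\<exists>\<xi>. cluster \<omega> \<xi> \<and> infinite \<xi> \<and> SA \<xi> \<inter> C1 \<noteq> {}"
proof (rule ccontr)
  assume H: "\<not> ?thesis"
  then have fin: "\<And>\<xi>. cluster \<omega> \<xi> \<Longrightarrow> SA \<xi> \<inter> C1 \<noteq> {} \<Longrightarrow> finite \<xi>" by blast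
  have C1c: "C1 \<in> components (Pset \<omega>)" and C2c: "C2 \<in> components (Pset \<omega>)" using C1 C2 contours_eq by auto
  define X where "X = {\<xi>. cluster \<omega> \<xi> \<and> SA \<xi> \<inter> C1 \<noteq> {}}"
  define A where "A = \<Union>X"
  define T where "T = C1 \<union> SA A"
  have clA: "w \<in> A" if h1: "u \<in> A" and h2: "reach \<omega> u w" for u w
  proof -
    obtain \<xi> where "\<xi> \<in> X" "u \<in> \<xi>" using h1 unfolding A_def by blast
    moreover obtain v where "\<xi> = {w. reach \<omega> v w}" using \<open>\<xi> \<in> X\<close> cluster_form unfolding X_def by blast
    ultimately have "w \<in> \<xi>" using h2 by auto
    then show ?thesis using \<open>\<xi> \<in> X\<close> unfolding A_def by blast
  qed
  have SAA: "SA A = \<Union> (SA ` X)" unfolding SA_def A_def by auto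
  have clC1: "closed C1" using closed_components[OF closed_Pset C1c] .
  have Tcl: "closed T" unfolding T_def using clC1 closed_SA by blast
  have cC1: "connected C1" using in_components_connected[OF C1c] .
  have cC2: "connected C2" using in_components_connected[OF C2c] .
  have neC1: "C1 \<noteq> {}" using in_components_nonempty[OF C1c] .
  have neC2: "C2 \<noteq> {}" using in_components_nonempty[OF C2c] .
  have Tconn: "connected T"
  proof -
    have eq: "T = \<Union> (insert C1 ((\<lambda>\<xi>. C1 \<union> SA \<xi>) ` X))" unfolding T_def SAA by auto
    have "connected (C1 \<union> SA \<xi>)" if hx: "\<xi> \<in> X" for \<xi>
    proof -
      obtain v where "\<xi> = {w. reach \<omega> v w}" using hx cluster_form unfolding X_def by blast
      then have "connected (SA \<xi>)" using connected_SA by simp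
      moreover have "C1 \<inter> SA \<xi> \<noteq> {}" using hx unfolding X_def by blast
      ultimately show ?thesis using cC1 connected_Un by blast
    qed
    moreover have "C1 \<subseteq> \<Inter> (insert C1 ((\<lambda>\<xi>. C1 \<union> SA \<xi>) ` X))" by auto
    ultimately show ?thesis unfolding eq using cC1 neC1 by (intro connected_Union) auto
  qed
  have C12: "C1 \<inter> C2 = {}" using components_nonoverlap[OF C1c C2c] ne by blast
  have C2T: "C2 \<inter> T = {}"
  proof -
    have "C2 \<inter> SA \<xi> = {}" if "\<xi> \<in> X" for \<xi>
    proof (rule ccontr)
      assume a: "C2 \<inter> SA \<xi> \<noteq> {}"
      have cl: "cluster \<omega> \<xi>" and m1: "SA \<xi> \<inter> C1 \<noteq> {}" using that unfolding X_def by auto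
      obtain v where xi: "\<xi> = {w. reach \<omega> v w}" using cl cluster_form by blast
      have "C1 = C2" using thm3[OF O fin[OF cl m1] xi C1 C2 ub1 ub2 m1] a by blast
      then show False using ne by blast
    qed
    then show ?thesis unfolding T_def SAA using C12 by blast
  qed
  obtain c2 where c2: "c2 \<in> C2" using neC2 by blast
  let ?V = "connected_component_set (- T) c2"
  have c2T: "c2 \<in> - T" using c2 C2T by blast
  have Vc: "?V \<in> components (- T)" by (rule componentsI[OF c2T])
  have C2V: "C2 \<subseteq> ?V" by (rule connected_component_maximal[OF c2 cC2]) (use C2T in blast)
  have VT: "?V \<subseteq> - T" using connected_component_subset by blast
  have cF: "connected (frontier ?V)" by (rule connected_frontier_component_complement[OF Tconn Vc])
  have FT: "frontier ?V \<subseteq> T" by (rule frontier_of_components_closed_complement[OF Tcl Vc])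
  have fSA: "frontier (SA A) \<subseteq> Pset \<omega>"
  proof (rule frontier_SA[OF O])
    fix u w assume "u \<in> A" "reach \<omega> u w" then show "w \<in> A" by (rule clA)
  qed
  have FP: "frontier ?V \<subseteq> Pset \<omega>"
  proof -
    have "frontier ?V \<subseteq> frontier T" using frontier_of_components_subset[OF Vc] by simp
    also have "\<dots> \<subseteq> frontier C1 \<union> frontier (SA A)" unfolding T_def by (rule frontier_Un_subset)
    also have "\<dots> \<subseteq> Pset \<omega>" using frontier_subset_closed[OF clC1] in_components_subset[OF C1c]
        fSA by blast
    finally show ?thesis .
  qed
  obtain b0 where b0: "b0 \<in> C1" using neC1 by blast
  have c2V: "c2 \<in> ?V" using c2 C2V by blast
  have b0V: "b0 \<notin> ?V" using b0 VT unfolding T_def by blast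
  have "UNIV \<inter> frontier ?V \<noteq> {}"
    by (rule connected_Int_frontier[OF convex_connected[OF convex_UNIV]]) (use c2V b0V in blast)+
  then obtain f0 where f0: "f0 \<in> frontier ?V" by blast
  have "f0 \<in> closure ?V" using f0 unfolding frontier_def by blast
  moreover have "closure ?V \<subseteq> closure (- SA A)" using VT unfolding T_def by (intro closure_mono) blast
  ultimately have "f0 \<in> SA (- A)" using closure_compl_SA by blast
  then obtain u where u: "u \<notin> A" "f0 \<in> cell u" unfolding SA_def by blast
  have f0C1: "f0 \<notin> C1"
  proof
    assume "f0 \<in> C1"
    let ?\<eta> = "{w. reach \<omega> u w}"
    have "cluster \<omega> ?\<eta>" unfolding cluster_def by blast
    moreover have "SA ?\<eta> \<inter> C1 \<noteq> {}" using u(2) \<open>f0 \<in> C1\<close> unfolding SA_def by blast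
    ultimately have "?\<eta> \<in> X" unfolding X_def by blast
    then have "u \<in> A" unfolding A_def by blast
    then show False using u(1) by blast
  qed
  then have "f0 \<in> SA A" using f0 FT unfolding T_def by blast
  then obtain \<xi> where xiX: "\<xi> \<in> X" "f0 \<in> SA \<xi>" unfolding SAA by blast
  have clx: "cluster \<omega> \<xi>" and m1: "SA \<xi> \<inter> C1 \<noteq> {}" using xiX(1) unfolding X_def by auto
  obtain v where xi: "\<xi> = {w. reach \<omega> v w}" using clx cluster_form by blast
  let ?D = "connected_component_set (Pset \<omega>) f0"
  have f0P: "f0 \<in> Pset \<omega>" using f0 FP by blast
  have Dc: "?D \<in> contours \<omega>" unfolding contours_eq by (rule componentsI[OF f0P])
  have FD: "frontier ?V \<subseteq> ?D" by (rule connected_component_maximal[OF f0 cF FP])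
  have f0D: "f0 \<in> ?D" using f0P by simp
  have bD: "bounded ?D"
  proof (rule ccontr)
    assume "\<not> bounded ?D"
    moreover have "SA \<xi> \<inter> ?D \<noteq> {}" using xiX(2) f0D by blast
    ultimately have "C1 = ?D" using thm3[OF O fin[OF clx m1] xi C1 Dc ub1] m1 by blast
    then show False using f0C1 f0D by blast
  qed
  then have "bounded (frontier ?V)" using FD bounded_subset by blast
  then obtain r where r: "\<And>x. x \<in> frontier ?V \<Longrightarrow> norm x \<le> r" unfolding bounded_iff by blast
  let ?B = "- cball (0::real\<times>real) r"
  have BF: "?B \<inter> frontier ?V = {}" using r by (force simp: mem_cball_0)
  obtain b2 where b2: "b2 \<in> C2" "b2 \<in> ?B" using unbounded_point[OF ub2] by blast
  have BV: "?B \<subseteq> ?V"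
  proof (rule ccontr)
    assume "\<not> ?B \<subseteq> ?V"
    then have "?B - ?V \<noteq> {}" by blast
    moreover have "?B \<inter> ?V \<noteq> {}" using b2 C2V by blast
    ultimately have "?B \<inter> frontier ?V \<noteq> {}" using connected_Int_frontier[OF connected_outside_cball] by blast
    then show False using BF by blast
  qed
  obtain b1 where b1: "b1 \<in> C1" "b1 \<in> ?B" using unbounded_point[OF ub1] by blast
  then have "b1 \<in> ?V" using BV by blast
  then show False using VT b1(1) unfolding T_def by blast
qed



definition obox :: "vertex \<Rightarrow> (real \<times> real) set" where
  "obox u = {of_int (fst u) - 1/2 <..< of_int (fst u) + 1/2} \<times> {of_int (snd u) - 1/2 <..< of_int (snd u) + 1/2}"

lemma connected_box: "connected (obox u)"
  unfolding obox_def by (intro convex_connected convex_Times) auto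

lemma vpt_box: "vpt u \<in> obox u"
  unfolding obox_def vpt_def by auto

lemma int_half_ne: fixes a n :: int shows "real_of_int a \<noteq> real_of_int n + 1/2"
proof
  assume h: "real_of_int a = real_of_int n + 1/2"
  have "a \<le> n" by (rule ile) (use h in linarith)
  moreover have "real_of_int n < real_of_int a" using h by linarith
  then have "n < a" by simp
  ultimately show False by simp
qed

lemma obox_P: "obox u \<inter> Pset \<omega> = {}"
proof (rule ccontr)
  assume "obox u \<inter> Pset \<omega> \<noteq> {}"
  then obtain q where q: "q \<in> obox u" "q \<in> Pset \<omega>" by blast
  have qb: "of_int (fst u) - 1/2 < fst q" "fst q < of_int (fst u) + 1/2"
     "of_int (snd u) - 1/2 < snd q" "snd q < of_int (snd u) + 1/2" using q(1) unfolding obox_def by auto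
  from q(2) obtain m n where "(hpres \<omega> m n \<and> q \<in> hseg m n) \<or> (vpres \<omega> m n \<and> q \<in> vseg m n)"
    unfolding mem_Pset by blast
  then show False
  proof
    assume "hpres \<omega> m n \<and> q \<in> hseg m n"
    then have s: "snd q = of_int n + 1/2" unfolding hseg_def by auto
    have "snd u \<le> n" by (rule ile) (use s qb in linarith)
    moreover have "real_of_int n < real_of_int (snd u)" using s qb by linarith
    then have "n < snd u" by simp
    ultimately show False by simp
  next
    assume "vpres \<omega> m n \<and> q \<in> vseg m n"
    then have s: "fst q = of_int m + 1/2" unfolding vseg_def by auto
    have "fst u \<le> m" by (rule ile) (use s qb in linarith)
    moreover have "real_of_int m < real_of_int (fst u)" using s qb by linarith
    then have "m < fst u" by simp
    ultimately show False by simp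
  qed
qed

lemma seg_P_h:
  assumes "\<omega> (a,b) = \<omega> (a+1,b)"
  shows "closed_segment (vpt (a,b)) (vpt (a+1,b)) \<inter> Pset \<omega> = {}"
proof (rule ccontr)
  assume "closed_segment (vpt (a,b)) (vpt (a+1,b)) \<inter> Pset \<omega> \<noteq> {}"
  then obtain q where q: "q \<in> closed_segment (vpt (a,b)) (vpt (a+1,b))" "q \<in> Pset \<omega>" by blast
  have "closed_segment (vpt (a,b)) (vpt (a+1,b)) = {p. snd p = of_int b \<and> of_int a \<le> fst p \<and> fst p \<le> of_int a + 1}"
    unfolding vpt_def by (simp add: seg_h)
  then have qs: "snd q = of_int b" "of_int a \<le> fst q" "fst q \<le> of_int a + 1" using q(1) by auto
  from q(2) obtain m n where "(hpres \<omega> m n \<and> q \<in> hseg m n) \<or> (vpres \<omega> m n \<and> q \<in> vseg m n)"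
    unfolding mem_Pset by blast
  then show False
  proof
    assume "hpres \<omega> m n \<and> q \<in> hseg m n"
    then have "snd q = of_int n + 1/2" unfolding hseg_def by auto
    then show False using qs int_half_ne by metis
  next
    assume h: "vpres \<omega> m n \<and> q \<in> vseg m n"
    then have s: "fst q = of_int m + 1/2" "of_int n - 1/2 \<le> snd q" "snd q \<le> of_int n + 3/2" unfolding vseg_def by auto
    have "a \<le> m" by (rule ile) (use s qs in linarith)
    moreover have "m \<le> a" by (rule ile) (use s qs in linarith)
    ultimately have ma: "m = a" by simp
    have "n \<le> b" by (rule ile) (use s qs in linarith)
    moreover have "b \<le> n + 1" by (rule ile) (use s qs in linarith)
    ultimately have "b = n \<or> b = n + 1" by linarith
    then show False using h assms ma unfolding vpres_def by auto
  qed
qed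

lemma seg_P_v:
  assumes "\<omega> (a,b) = \<omega> (a,b+1)"
  shows "closed_segment (vpt (a,b)) (vpt (a,b+1)) \<inter> Pset \<omega> = {}"
proof (rule ccontr)
  assume "closed_segment (vpt (a,b)) (vpt (a,b+1)) \<inter> Pset \<omega> \<noteq> {}"
  then obtain q where q: "q \<in> closed_segment (vpt (a,b)) (vpt (a,b+1))" "q \<in> Pset \<omega>" by blast
  have "closed_segment (vpt (a,b)) (vpt (a,b+1)) = {p. fst p = of_int a \<and> of_int b \<le> snd p \<and> snd p \<le> of_int b + 1}"
    unfolding vpt_def by (simp add: seg_v)
  then have qs: "fst q = of_int a" "of_int b \<le> snd q" "snd q \<le> of_int b + 1" using q(1) by auto
  from q(2) obtain m n where "(hpres \<omega> m n \<and> q \<in> hseg m n) \<or> (vpres \<omega> m n \<and> q \<in> vseg m n)"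
    unfolding mem_Pset by blast
  then show False
  proof
    assume h: "hpres \<omega> m n \<and> q \<in> hseg m n"
    then have s: "snd q = of_int n + 1/2" "of_int m - 1/2 \<le> fst q" "fst q \<le> of_int m + 3/2" unfolding hseg_def by auto
    have "b \<le> n" by (rule ile) (use s qs in linarith)
    moreover have "n \<le> b" by (rule ile) (use s qs in linarith)
    ultimately have nb: "n = b" by simp
    have "m \<le> a" by (rule ile) (use s qs in linarith)
    moreover have "a \<le> m + 1" by (rule ile) (use s qs in linarith)
    ultimately have "a = m \<or> a = m + 1" by linarith
    then show False using h assms nb unfolding hpres_def by auto
  next
    assume "vpres \<omega> m n \<and> q \<in> vseg m n"
    then have "fst q = of_int m + 1/2" unfolding vseg_def by auto
    then show False using qs int_half_ne by metis
  qed
qed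

lemma seg_P:
  assumes "same_step \<omega> u w"
  shows "closed_segment (vpt u) (vpt w) \<inter> Pset \<omega> = {}"
proof -
  obtain a b c d where uw: "u = (a,b)" "w = (c,d)" by (cases u, cases w)
  have g: "\<bar>a - c\<bar> + \<bar>b - d\<bar> = 1" and eq: "\<omega> (a,b) = \<omega> (c,d)"
    using assms uw unfolding same_step_def grid_adj_def by auto
  then have "(c = a+1 \<and> d = b) \<or> (a = c+1 \<and> d = b) \<or> (c = a \<and> d = b+1) \<or> (c = a \<and> b = d+1)" by arith
  then show ?thesis
  proof (elim disjE conjE)
    assume "c = a+1" "d = b" then show ?thesis using seg_P_h[of \<omega> a b] eq uw by simp
  next
    assume h: "a = c+1" "d = b" then show ?thesis using seg_P_h[of \<omega> c b] eq uw by (simp add: closed_segment_commute)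
  next
    assume "c = a" "d = b+1" then show ?thesis using seg_P_v[of \<omega> a b] eq uw by simp
  next
    assume h: "c = a" "b = d+1" then show ?thesis using seg_P_v[of \<omega> a d] eq uw by (simp add: closed_segment_commute)
  qed
qed

definition star :: "config \<Rightarrow> vertex \<Rightarrow> (real \<times> real) set" where
  "star \<omega> u = \<Union> (insert (obox u) ((\<lambda>w. closed_segment (vpt u) (vpt w)) ` {w. same_step \<omega> u w}))"

lemma vpt_star: "vpt u \<in> star \<omega> u"
  unfolding star_def using vpt_box by blast

lemma connected_star: "connected (star \<omega> u)"
  unfolding star_def
proof (rule connected_Union)
  show "\<And>s. s \<in> insert (obox u) ((\<lambda>w. closed_segment (vpt u) (vpt w)) ` {w. same_step \<omega> u w}) \<Longrightarrow> connected s"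
    using connected_box connected_segment by blast
  have "vpt u \<in> \<Inter> (insert (obox u) ((\<lambda>w. closed_segment (vpt u) (vpt w)) ` {w. same_step \<omega> u w}))"
    using vpt_box by auto
  then show "\<Inter> (insert (obox u) ((\<lambda>w. closed_segment (vpt u) (vpt w)) ` {w. same_step \<omega> u w})) \<noteq> {}" by blast
qed

lemma star_adj: "same_step \<omega> u w \<Longrightarrow> star \<omega> u \<inter> star \<omega> w \<noteq> {}"
proof -
  assume "same_step \<omega> u w"
  then have "same_step \<omega> w u" by (rule same_step_sym)
  then have "closed_segment (vpt w) (vpt u) \<subseteq> star \<omega> w" unfolding star_def by blast
  then have "vpt u \<in> star \<omega> w" using ends_in_segment(2) by blast
  then show ?thesis using vpt_star by blast
qed

lemma star_P: "star \<omega> u \<inter> Pset \<omega> = {}"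
proof -
  have "X \<inter> Pset \<omega> = {}" if hX: "X \<in> insert (obox u) ((\<lambda>w. closed_segment (vpt u) (vpt w)) ` {w. same_step \<omega> u w})" for X
  proof -
    from hX have "X = obox u \<or> (\<exists>w. same_step \<omega> u w \<and> X = closed_segment (vpt u) (vpt w))" by blast
    then show ?thesis using obox_P seg_P by blast
  qed
  then show ?thesis unfolding star_def by blast
qed

lemma half_mult: fixes t x :: real assumes "0 \<le> t" "t < 1" "\<bar>x\<bar> \<le> 1/2" shows "\<bar>t * x\<bar> < 1/2"
proof -
  have "\<bar>t * x\<bar> = t * \<bar>x\<bar>" using assms(1) by (simp add: abs_mult)
  also have "\<dots> \<le> t * (1/2)" by (rule mult_left_mono[OF assms(3) assms(1)])
  also have "\<dots> < 1/2" using assms(2) by simp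
  finally show ?thesis .
qed

lemma seg_to_cell: assumes "p \<in> cell v" shows "closed_segment (vpt v) p \<subseteq> obox v \<union> {p}"
proof
  fix q assume "q \<in> closed_segment (vpt v) p"
  then obtain t where t: "0 \<le> t" "t \<le> 1" "q = (1 - t) *\<^sub>R vpt v + t *\<^sub>R p" unfolding closed_segment_def by blast
  show "q \<in> obox v \<union> {p}"
  proof (cases "t = 1")
    case True then show ?thesis using t by simp
  next
    case False
    then have t1: "t < 1" using t by simp
    have "\<bar>fst p - of_int (fst v)\<bar> \<le> 1/2" "\<bar>snd p - of_int (snd v)\<bar> \<le> 1/2" using assms unfolding cell_def by auto
    then have "\<bar>t * (fst p - of_int (fst v))\<bar> < 1/2" "\<bar>t * (snd p - of_int (snd v))\<bar> < 1/2"
      using half_mult t(1) t1 by blast+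
    moreover have "fst q = of_int (fst v) + t * (fst p - of_int (fst v))" "snd q = of_int (snd v) + t * (snd p - of_int (snd v))"
      using t(3) unfolding vpt_def by (auto simp: algebra_simps)
    ultimately have "of_int (fst v) - 1/2 < fst q" "fst q < of_int (fst v) + 1/2"
      "of_int (snd v) - 1/2 < snd q" "snd q < of_int (snd v) + 1/2" unfolding abs_less_iff by linarith+
    then have "q \<in> obox v" unfolding obox_def mem_Times_iff greaterThanLessThan_iff by blast
    then show ?thesis by blast
  qed
qed

lemma part4:
  assumes O: "\<omega> \<in> Omega" and C1: "C1 \<in> contours \<omega>" and CC: "\<And>C. C \<in> \<C> \<Longrightarrow> C \<in> contours \<omega>"
    and nC: "C1 \<notin> \<C>" and R: "R \<in> components (- \<Union> \<C>)" and C1R: "C1 \<subseteq> R"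
    and xi: "\<xi> = {w. reach \<omega> v0 w}" and m: "SA \<xi> \<inter> C1 \<noteq> {}"
  shows "vpt ` \<xi> \<subseteq> R"
proof -
  have C1c: "C1 \<in> components (Pset \<omega>)" using C1 contours_eq by simp
  obtain p v where pv: "p \<in> cell v" "v \<in> \<xi>" "p \<in> C1" using m unfolding SA_def by blast
  let ?Y = "\<Union> (star \<omega> ` \<xi>)"
  have cY: "connected ?Y" unfolding xi by (rule connected_reach_Union[OF connected_star _ star_adj]) (use vpt_star in blast)
  have vY: "vpt v \<in> ?Y" using pv(2) vpt_star by blast
  let ?K = "C1 \<union> closed_segment (vpt v) p \<union> ?Y"
  have cK: "connected ?K"
  proof -
    have "connected (C1 \<union> closed_segment (vpt v) p)"
      using connected_Un[OF in_components_connected[OF C1c] connected_segment] pv(3) by blast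
    moreover have "(C1 \<union> closed_segment (vpt v) p) \<inter> ?Y \<noteq> {}" using vY by auto
    ultimately show ?thesis using connected_Un cY by blast
  qed
  have UP: "\<Union> \<C> \<subseteq> Pset \<omega>" using CC contours_eq in_components_subset by blast
  have "C1 \<inter> C = {}" if "C \<in> \<C>" for C
    using components_nonoverlap[OF C1c, of C] CC[OF that] contours_eq nC that by auto
  then have a1: "C1 \<inter> \<Union> \<C> = {}" by blast
  have a2: "closed_segment (vpt v) p \<inter> \<Union> \<C> = {}" using seg_to_cell[OF pv(1)] obox_P UP a1 pv(3) by blast
  have a3: "?Y \<inter> \<Union> \<C> = {}" using star_P UP by blast
  have KC: "?K \<subseteq> - \<Union> \<C>" using a1 a2 a3 by blast
  have "R \<inter> ?K \<noteq> {}" using C1R pv(3) by blast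
  then have "?K \<subseteq> R" using components_maximal[OF R cK KC] by blast
  moreover have "vpt ` \<xi> \<subseteq> ?Y" using vpt_star by blast
  ultimately show ?thesis by blast
qed

theorem lemma2p5:
  fixes \<omega> :: config
  assumes "\<omega> \<in> Omega"
  shows
    "((\<exists>C1 C2. infinite_contour \<omega> C1 \<and> infinite_contour \<omega> C2 \<and> C1 \<noteq> C2) \<longrightarrow>
        (\<exists>\<xi>. cluster \<omega> \<xi> \<and> infinite \<xi> \<and> (\<forall>v\<in>\<xi>. \<omega> v = 0) \<or>
              cluster \<omega> \<xi> \<and> infinite \<xi> \<and> (\<forall>v\<in>\<xi>. \<omega> v = 1)))
   \<and> (\<forall>C1 C2. infinite_contour \<omega> C1 \<and> infinite_contour \<omega> C2 \<and> C1 \<noteq> C2 \<longrightarrow>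
        (\<exists>\<xi>. cluster \<omega> \<xi> \<and> infinite \<xi> \<and> incident \<omega> \<xi> C1))
   \<and> (\<forall>\<xi> C1 C2. cluster \<omega> \<xi> \<and> infinite_contour \<omega> C1 \<and> infinite_contour \<omega> C2 \<and> C1 \<noteq> C2
        \<and> incident \<omega> \<xi> C1 \<and> incident \<omega> \<xi> C2 \<longrightarrow> infinite \<xi>)
   \<and> (\<forall>C1 \<C> R. infinite_contour \<omega> C1 \<and> \<C> \<noteq> {} \<and> (\<forall>C\<in>\<C>. infinite_contour \<omega> C) \<and> C1 \<notin> \<C>
        \<and> R \<in> components (- \<Union> \<C>) \<and> \<not> bounded R \<and> C1 \<subseteq> R \<longrightarrow>
        (\<exists>\<xi>. cluster \<omega> \<xi> \<and> infinite \<xi> \<and> vpt ` \<xi> \<subseteq> R))"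
proof -
  note O = assms
  have ic: "C \<in> contours \<omega>" "\<not> bounded C" if "infinite_contour \<omega> C" for C
    using that infinite_contour_unbounded unfolding infinite_contour_def by auto
  have P1: "\<exists>\<xi>. cluster \<omega> \<xi> \<and> infinite \<xi> \<and> (\<forall>v\<in>\<xi>. \<omega> v = 0) \<or>
              cluster \<omega> \<xi> \<and> infinite \<xi> \<and> (\<forall>v\<in>\<xi>. \<omega> v = 1)"
    if ex: "\<exists>C1 C2. infinite_contour \<omega> C1 \<and> infinite_contour \<omega> C2 \<and> C1 \<noteq> C2"
  proof -
    obtain C1 C2 where h: "infinite_contour \<omega> C1" "infinite_contour \<omega> C2" "C1 \<noteq> C2" using ex by blast
    obtain \<xi> where x: "cluster \<omega> \<xi>" "infinite \<xi>" using main2[OF O ic(1)[OF h(1)] ic(1)[OF h(2)] h(3) ic(2)[OF h(1)] ic(2)[OF h(2)]] by blast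
    obtain v where xi: "\<xi> = {w. reach \<omega> v w}" using x(1) cluster_form by blast
    have vals: "\<forall>w\<in>\<xi>. \<omega> w = \<omega> v" using xi reach_val by blast
    have "\<omega> v \<in> {0,1}" using O unfolding Omega_def by blast
    then show ?thesis using vals x by auto
  qed
  have P2: "\<exists>\<xi>. cluster \<omega> \<xi> \<and> infinite \<xi> \<and> incident \<omega> \<xi> C1"
    if h: "infinite_contour \<omega> C1" "infinite_contour \<omega> C2" "C1 \<noteq> C2" for C1 C2
  proof -
    obtain \<xi> where x: "cluster \<omega> \<xi>" "infinite \<xi>" "SA \<xi> \<inter> C1 \<noteq> {}"
      using main2[OF O ic(1)[OF h(1)] ic(1)[OF h(2)] h(3) ic(2)[OF h(1)] ic(2)[OF h(2)]] by blast
    obtain v where xi: "\<xi> = {w. reach \<omega> v w}" using x(1) cluster_form by blast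
    have "incident \<omega> \<xi> C1" by (rule meets_incident[OF O xi ic(1)[OF h(1)] x(3)])
    then show ?thesis using x by blast
  qed
  have P3: "infinite \<xi>"
    if h: "cluster \<omega> \<xi>" "infinite_contour \<omega> C1" "infinite_contour \<omega> C2" "C1 \<noteq> C2"
       "incident \<omega> \<xi> C1" "incident \<omega> \<xi> C2" for \<xi> C1 C2
  proof
    assume fin: "finite \<xi>"
    obtain v where xi: "\<xi> = {w. reach \<omega> v w}" using h(1) cluster_form by blast
    have "C1 = C2" using thm3[OF O fin xi ic(1)[OF h(2)] ic(1)[OF h(3)] ic(2)[OF h(2)] ic(2)[OF h(3)]
      incident_meets[OF h(5)] incident_meets[OF h(6)]] .
    then show False using h(4) by blast
  qed
  have P4: "\<exists>\<xi>. cluster \<omega> \<xi> \<and> infinite \<xi> \<and> vpt ` \<xi> \<subseteq> R"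
    if h: "infinite_contour \<omega> C1" "\<C> \<noteq> {}" "\<forall>C\<in>\<C>. infinite_contour \<omega> C" "C1 \<notin> \<C>"
       "R \<in> components (- \<Union> \<C>)" "\<not> bounded R" "C1 \<subseteq> R" for C1 \<C> R
  proof -
    obtain C2 where C2: "C2 \<in> \<C>" using h(2) by blast
    then have h2: "infinite_contour \<omega> C2" "C1 \<noteq> C2" using h(3,4) by auto
    obtain \<xi> where x: "cluster \<omega> \<xi>" "infinite \<xi>" "SA \<xi> \<inter> C1 \<noteq> {}"
      using main2[OF O ic(1)[OF h(1)] ic(1)[OF h2(1)] h2(2) ic(2)[OF h(1)] ic(2)[OF h2(1)]] by blast
    obtain v where xi: "\<xi> = {w. reach \<omega> v w}" using x(1) cluster_form by blast
    have CC: "\<And>C. C \<in> \<C> \<Longrightarrow> C \<in> contours \<omega>" using h(3) ic(1) by blast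
    have "vpt ` \<xi> \<subseteq> R" by (rule part4[OF O ic(1)[OF h(1)] CC h(4) h(5) h(7) xi x(3)])
    then show ?thesis using x by blast
  qed
  show ?thesis
    apply (intro conjI)
    subgoal by (intro impI) (rule P1)
    subgoal by (intro allI impI, elim conjE) (rule P2; assumption)
    subgoal by (intro allI impI, elim conjE) (rule P3; assumption)
    subgoal by (intro allI impI, elim conjE) (rule P4; assumption)
    done
qed


end
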